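(* Let $\mathcal{C}=\mathsf{CSS}(A,B)$ with $A,B\subseteq\mathbb{F}_q^n$. If there exists a diagonal $n\times n$ matrix $D$ over $\mathbb{F}_q$ whose diagonal coefficients are not all equal such that $aD\in A$ and $bD\in B$ for all $a\in A$ and $b\in B$, then $\mathcal{C}$ is a splitting code.
   Context: For a CSS code $\mathsf{CSS}(A,B)$ given by subspaces $A,B\subseteq\mathbb{F}_q^n$ (vectors treated as row vectors), a subspace $A$ splits on a non-empty $h\subsetneq\{1,\dots,n\}$ if $A=A_1\oplus A_2$ where $A_1$ has support $h$ and $A_2$ is supported on the complement of $h$. The code splits on $h$ if both $A$ and $B$ split on $h$, and it is a splitting code if it splits on some such $h$. *)

theory Defs
  imports "HOL-Analysis.Analysis"
begin

text \<open>Vectors in F_q^n are rendered as 'a ^ 'n with 'a a finite field and 'n a finite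
  index type (the coordinates {1..n}). Subspaces are vec.subspace (F-linear subspaces).\<close>

definition supported_on :: "('a::zero ^ 'n) set \<Rightarrow> 'n set \<Rightarrow> bool" where
  "supported_on S h \<longleftrightarrow> (\<forall>v\<in>S. \<forall>i. i \<notin> h \<longrightarrow> v $ i = 0)"

definition subspace_splits_on :: "('a::field ^ 'n) set \<Rightarrow> 'n set \<Rightarrow> bool" where
  "subspace_splits_on A h \<longleftrightarrow>
     (\<exists>A1 A2. vec.subspace A1 \<and> vec.subspace A2 \<and>
        supported_on A1 h \<and> supported_on A2 (- h) \<and>
        A1 \<inter> A2 = {0} \<and> A = {x + y | x y. x \<in> A1 \<and> y \<in> A2})"

definition css_splits_on :: "('a::field ^ 'n) set \<Rightarrow> ('a ^ 'n) set \<Rightarrow> 'n set \<Rightarrow> bool" where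
  "css_splits_on A B h \<longleftrightarrow> h \<noteq> {} \<and> h \<noteq> UNIV \<and> subspace_splits_on A h \<and> subspace_splits_on B h"

definition splitting_code :: "('a::field ^ 'n) set \<Rightarrow> ('a ^ 'n) set \<Rightarrow> bool" where
  "splitting_code A B \<longleftrightarrow> (\<exists>h. css_splits_on A B h)"

end

theory Submission
  imports Defs
begin

lemma vmd:
  assumes "\<forall>i j. i \<noteq> j \<longrightarrow> D $ i $ j = 0"
  shows "(x::'a::field^'n) v* D = (\<chi> i. D $ i $ i * x $ i)"
proof -
  have "\<And>j. (\<Sum>i\<in>UNIV. x $ i * D $ i $ j) = D $ j $ j * x $ j"
    by (subst sum.remove[of _ j]) (auto simp: assms)
  then show ?thesis by (simp add: vector_matrix_mult_def)
qed

lemma prod_closed: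
  fixes A :: "('a::field^'n) set"
  assumes A: "vec.subspace A" and T: "\<forall>a\<in>A. (\<chi> i. d i * a $ i) \<in> A"
    and S: "finite S"
  shows "\<forall>a\<in>A. (\<chi> i. (\<Prod>\<mu>\<in>S. d i - \<mu>) * a $ i) \<in> A"
  using S
proof (induction S rule: finite_induct)
  case empty
  then show ?case by simp
next
  case (insert m S)
  show ?case
  proof
    fix a assume a: "a \<in> A"
    let ?y = "(\<chi> i. (\<Prod>\<mu>\<in>S. d i - \<mu>) * a $ i)"
    have y: "?y \<in> A" using insert a by blast
    have eq: "(\<chi> i. (\<Prod>\<mu>\<in>insert m S. d i - \<mu>) * a $ i) = (\<chi> i. d i * ?y $ i) - m *s ?y"
      by (simp add: vec_eq_iff prod.insert[OF insert(1,2)] left_diff_distrib mult.assoc)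
    show "(\<chi> i. (\<Prod>\<mu>\<in>insert m S. d i - \<mu>) * a $ i) \<in> A"
      unfolding eq using y T A vec.subspace_diff vec.subspace_scale by blast
  qed
qed

lemma split_of_proj:
  fixes A :: "('a::field^'n) set"
  assumes A: "vec.subspace A"
    and P: "\<forall>a\<in>A. (\<chi> i. if i \<in> h then a $ i else 0) \<in> A"
  shows "subspace_splits_on A h"
proof -
  define A1 where "A1 = {x\<in>A. \<forall>i. i \<notin> h \<longrightarrow> x $ i = 0}"
  define A2 where "A2 = {x\<in>A. \<forall>i. i \<in> h \<longrightarrow> x $ i = 0}"
  have s1: "vec.subspace A1" unfolding vec.subspace_def
  proof (intro conjI ballI allI)
    show "0 \<in> A1" using A vec.subspace_0 unfolding A1_def by simp
  next
    fix x y assume "x \<in> A1" "y \<in> A1"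
    then show "x + y \<in> A1" unfolding A1_def by (auto intro: vec.subspace_add[OF A])
  next
    fix c x assume "x \<in> A1"
    then show "c *s x \<in> A1" unfolding A1_def by (auto intro: vec.subspace_scale[OF A])
  qed
  have s2: "vec.subspace A2" unfolding vec.subspace_def
  proof (intro conjI ballI allI)
    show "0 \<in> A2" using A vec.subspace_0 unfolding A2_def by simp
  next
    fix x y assume "x \<in> A2" "y \<in> A2"
    then show "x + y \<in> A2" unfolding A2_def by (auto intro: vec.subspace_add[OF A])
  next
    fix c x assume "x \<in> A2"
    then show "c *s x \<in> A2" unfolding A2_def by (auto intro: vec.subspace_scale[OF A])
  qed
  have i: "A1 \<inter> A2 = {0}"
  proof
    show "A1 \<inter> A2 \<subseteq> {0}"
    proof
      fix x assume x: "x \<in> A1 \<inter> A2"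
      have "\<And>i. x $ i = 0"
      proof -
        fix i show "x $ i = 0" using x unfolding A1_def A2_def by (cases "i \<in> h") auto
      qed
      then show "x \<in> {0}" by (simp add: vec_eq_iff)
    qed
    show "{0} \<subseteq> A1 \<inter> A2" using A vec.subspace_0 unfolding A1_def A2_def by simp
  qed
  have e: "A = {x + y | x y. x \<in> A1 \<and> y \<in> A2}"
  proof
    show "A \<subseteq> {x + y | x y. x \<in> A1 \<and> y \<in> A2}"
    proof
      fix a assume a: "a \<in> A"
      let ?p = "(\<chi> i. if i \<in> h then a $ i else 0)"
      have p: "?p \<in> A" using P a by blast
      have q: "a - ?p \<in> A" using p a A vec.subspace_diff by blast
      have "?p \<in> A1" using p unfolding A1_def by auto
      moreover have "a - ?p \<in> A2" using q unfolding A2_def by auto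
      moreover have "a = ?p + (a - ?p)" by simp
      ultimately show "a \<in> {x + y | x y. x \<in> A1 \<and> y \<in> A2}" by blast
    qed
  next
    show "{x + y | x y. x \<in> A1 \<and> y \<in> A2} \<subseteq> A"
      using A vec.subspace_add unfolding A1_def A2_def by blast
  qed
  show ?thesis unfolding subspace_splits_on_def
  proof (rule exI[of _ A1], rule exI[of _ A2])
    have "supported_on A1 h" unfolding supported_on_def A1_def by simp
    moreover have "supported_on A2 (- h)" unfolding supported_on_def A2_def by simp
    ultimately show "vec.subspace A1 \<and> vec.subspace A2 \<and> supported_on A1 h \<and> supported_on A2 (- h) \<and>
        A1 \<inter> A2 = {0} \<and> A = {x + y | x y. x \<in> A1 \<and> y \<in> A2}" using s1 s2 i e by blast
  qed
qed

lemma proj_closed: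
  fixes A :: "('a::{field,finite}^'n) set"
  assumes A: "vec.subspace A" and T: "\<forall>a\<in>A. (\<chi> i. d i * a $ i) \<in> A"
  shows "\<forall>a\<in>A. (\<chi> i. if d i = l then a $ i else 0) \<in> A"
proof
  fix a assume a: "a \<in> A"
  define S where "S = {\<mu>::'a. \<mu> \<noteq> l}"
  have fS: "finite S" by simp
  define c where "c = (\<Prod>\<mu>\<in>S. l - \<mu>)"
  have c0: "c \<noteq> 0" unfolding c_def S_def by simp
  have z: "\<And>i. d i \<noteq> l \<Longrightarrow> (\<Prod>\<mu>\<in>S. d i - \<mu>) = 0"
  proof -
    fix i assume "d i \<noteq> l"
    then have "d i \<in> S" by (simp add: S_def)
    then show "(\<Prod>\<mu>\<in>S. d i - \<mu>) = 0" by (intro prod_zero[OF fS] bexI[of _ "d i"]) simp_all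
  qed
  have y: "(\<chi> i. (\<Prod>\<mu>\<in>S. d i - \<mu>) * a $ i) \<in> A"
    by (rule prod_closed[OF A T fS, rule_format, OF a])
  have ic: "inverse c *s (\<chi> i. (\<Prod>\<mu>\<in>S. d i - \<mu>) * a $ i) = (\<chi> i. if d i = l then a $ i else 0)"
  proof -
    have "\<And>i. inverse c * ((\<Prod>\<mu>\<in>S. d i - \<mu>) * a $ i) = (if d i = l then a $ i else 0)"
    proof -
      fix i show "inverse c * ((\<Prod>\<mu>\<in>S. d i - \<mu>) * a $ i) = (if d i = l then a $ i else 0)"
      proof (cases "d i = l")
        case True
        then have "(\<Prod>\<mu>\<in>S. d i - \<mu>) = c" by (simp add: c_def)
        then show ?thesis using True c0 by (simp add: mult.assoc[symmetric])
      next
        case False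
        then show ?thesis using z[OF False] by simp
      qed
    qed
    then show ?thesis by (simp add: vec_eq_iff)
  qed
  show "(\<chi> i. if d i = l then a $ i else 0) \<in> A"
    unfolding ic[symmetric] by (rule vec.subspace_scale[OF A y])
qed

theorem proposition14:
  fixes A B :: "('a::{field,finite} ^ 'n) set"
  assumes "vec.subspace A" and "vec.subspace B"
    and "\<exists>D :: 'a ^ 'n ^ 'n.
           (\<forall>i j. i \<noteq> j \<longrightarrow> D $ i $ j = 0) \<and>
           (\<exists>i j. D $ i $ i \<noteq> D $ j $ j) \<and>
           (\<forall>a\<in>A. a v* D \<in> A) \<and> (\<forall>b\<in>B. b v* D \<in> B)"
  shows "splitting_code A B"
proof -
  obtain D :: "'a ^ 'n ^ 'n" where D: "\<forall>i j. i \<noteq> j \<longrightarrow> D $ i $ j = 0"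
    and ij: "\<exists>i j. D $ i $ i \<noteq> D $ j $ j"
    and DA: "\<forall>a\<in>A. a v* D \<in> A" and DB: "\<forall>b\<in>B. b v* D \<in> B"
    using assms(3) by (elim exE conjE) (rule that; blast)
  obtain i j where ne: "D $ i $ i \<noteq> D $ j $ j" using ij by blast
  define d where "d = (\<lambda>k. D $ k $ k)"
  define h where "h = {k. d k = d i}"
  have vd: "\<And>x. x v* D = (\<chi> k. d k * x $ k)" using vmd[OF D] unfolding d_def by blast
  have TA: "\<forall>a\<in>A. (\<chi> k. d k * a $ k) \<in> A" using DA unfolding vd .
  have TB: "\<forall>b\<in>B. (\<chi> k. d k * b $ k) \<in> B" using DB unfolding vd .
  have PA: "\<forall>a\<in>A. (\<chi> k. if k \<in> h then a $ k else 0) \<in> A"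
    using proj_closed[OF assms(1) TA, of "d i"] by (simp add: h_def)
  have PB: "\<forall>b\<in>B. (\<chi> k. if k \<in> h then b $ k else 0) \<in> B"
    using proj_closed[OF assms(2) TB, of "d i"] by (simp add: h_def)
  have "i \<in> h" "j \<notin> h" using ne by (simp_all add: h_def d_def)
  then have "h \<noteq> {}" "h \<noteq> UNIV" by blast+
  then show ?thesis unfolding splitting_code_def css_splits_on_def
    using split_of_proj[OF assms(1) PA] split_of_proj[OF assms(2) PB] by blast
qed

end
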